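(* Let $V$ be a finite-dimensional real representation of $SO(3)$ and $v\in V$. Then $\dim\mathbf{Cov}_1(v)\in\{0,1,3\}$, and the symmetry class of $\mathbf{Cov}_1(v)$ is: $[SO(3)]$ iff $\mathbf{Cov}_1(v)=\{0\}$; $[SO(2)]$ iff $\dim\mathbf{Cov}_1(v)=1$; the trivial class $[\{1\}]$ iff $\dim\mathbf{Cov}_1(v)=3$.
   Context: $\mathbf{Cov}_1(v)\subset\mathbb{R}^3$ is the set of values at $v$ of all $SO(3)$-equivariant polynomial maps $V\to\mathbb{R}^3$ (standard action on $\mathbb{R}^3$); it is a linear subspace. The symmetry group of a subspace $F\subset\mathbb{R}^3$ is $\{g\in SO(3): gx=x\ \forall x\in F\}$ and its symmetry class is the conjugacy class of this group in $SO(3)$. $SO(2)$ denotes the group of rotations about the $z$-axis. *)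

theory Defs
  imports "HOL-Analysis.Analysis"
begin

definition SO3 :: "(real^3^3) set" where
  "SO3 = {g. orthogonal_matrix g \<and> det g = 1}"

definition SO2z :: "(real^3^3) set" where
  "SO2z = {g \<in> SO3. g *v axis (3::3) 1 = axis (3::3) 1}"

definition is_rep :: "(real^3^3 \<Rightarrow> real^'n^'n) \<Rightarrow> bool" where
  "is_rep \<rho> \<longleftrightarrow> continuous_on SO3 \<rho> \<and> \<rho> (mat 1) = mat 1 \<and>
     (\<forall>g\<in>SO3. \<forall>h\<in>SO3. \<rho> (g ** h) = \<rho> g ** \<rho> h)"

inductive poly_fun :: "(real^'n \<Rightarrow> real) \<Rightarrow> bool" where
  pf_const: "poly_fun (\<lambda>x. c)"
| pf_coord: "poly_fun (\<lambda>x. x $ i)"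
| pf_add: "poly_fun f \<Longrightarrow> poly_fun g \<Longrightarrow> poly_fun (\<lambda>x. f x + g x)"
| pf_mult: "poly_fun f \<Longrightarrow> poly_fun g \<Longrightarrow> poly_fun (\<lambda>x. f x * g x)"

definition poly_map :: "(real^'n \<Rightarrow> real^'m) \<Rightarrow> bool" where
  "poly_map f \<longleftrightarrow> (\<forall>i. poly_fun (\<lambda>x. f x $ i))"

definition equivariant_poly :: "(real^3^3 \<Rightarrow> real^'n^'n) \<Rightarrow> (real^'n \<Rightarrow> real^3) \<Rightarrow> bool" where
  "equivariant_poly \<rho> f \<longleftrightarrow> poly_map f \<and> (\<forall>g\<in>SO3. \<forall>x. f (\<rho> g *v x) = g *v f x)"

definition Cov1 :: "(real^3^3 \<Rightarrow> real^'n^'n) \<Rightarrow> real^'n \<Rightarrow> (real^3) set" where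
  "Cov1 \<rho> v = {f v | f. equivariant_poly \<rho> f}"

definition sym_group :: "(real^3) set \<Rightarrow> (real^3^3) set" where
  "sym_group F = {g \<in> SO3. \<forall>x\<in>F. g *v x = x}"

text \<open>The symmetry class of F is the conjugacy class [H] (conjugation inside SO(3)).\<close>
definition has_sym_class :: "(real^3) set \<Rightarrow> (real^3^3) set \<Rightarrow> bool" where
  "has_sym_class F H \<longleftrightarrow> (\<exists>k\<in>SO3. sym_group F = (\<lambda>h. k ** h ** transpose k) ` H)"

end

theory Submission
  imports Defs "HOL-Analysis.Cross3"
begin

unbundle cross3_syntax

lemma SO3_rot: "g \<in> SO3 \<longleftrightarrow> rotation_matrix g"
  by (simp add: SO3_def rotation_matrix_def)

lemma SO3_mul: "g \<in> SO3 \<Longrightarrow> h \<in> SO3 \<Longrightarrow> g ** h \<in> SO3"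
  by (simp add: SO3_def orthogonal_matrix_mul det_mul)

lemma SO3_transpose: "g \<in> SO3 \<Longrightarrow> transpose g \<in> SO3"
  by (simp add: SO3_def orthogonal_matrix_transpose det_transpose)

lemma SO3_id: "mat 1 \<in> SO3"
  by (simp add: SO3_def orthogonal_matrix_id)

lemma SO3_inv: "g \<in> SO3 \<Longrightarrow> transpose g ** g = mat 1 \<and> g ** transpose g = mat 1"
  by (simp add: SO3_def orthogonal_matrix_def)

lemma pf_minus: "poly_fun f \<Longrightarrow> poly_fun g \<Longrightarrow> poly_fun (\<lambda>x. f x - g x)"
proof -
  assume f: "poly_fun f" and g: "poly_fun g"
  have "poly_fun (\<lambda>x. f x + (\<lambda>x. -1) x * g x)"
    by (intro pf_add pf_mult pf_const f g)
  then show ?thesis by simp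
qed

lemma equiv_zero: "equivariant_poly \<rho> (\<lambda>x. 0)"
  by (simp add: equivariant_poly_def poly_map_def pf_const)

lemma equiv_add: "equivariant_poly \<rho> f \<Longrightarrow> equivariant_poly \<rho> g \<Longrightarrow> equivariant_poly \<rho> (\<lambda>x. f x + g x)"
  by (simp add: equivariant_poly_def poly_map_def pf_add matrix_vector_right_distrib)

lemma equiv_scale: "equivariant_poly \<rho> f \<Longrightarrow> equivariant_poly \<rho> (\<lambda>x. c *\<^sub>R f x)"
proof -
  assume a: "equivariant_poly \<rho> f"
  have "poly_fun (\<lambda>x. (\<lambda>x. c) x * f x $ i)" for i
    using a by (intro pf_mult pf_const) (simp add: equivariant_poly_def poly_map_def)
  then show ?thesis using a
    by (simp add: equivariant_poly_def poly_map_def matrix_vector_mult_scaleR)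
qed

lemma equiv_cross: "equivariant_poly \<rho> f \<Longrightarrow> equivariant_poly \<rho> g \<Longrightarrow> equivariant_poly \<rho> (\<lambda>x. f x \<times> g x)"
proof -
  assume f: "equivariant_poly \<rho> f" and g: "equivariant_poly \<rho> g"
  have pf: "poly_fun (\<lambda>x. f x $ i)" "poly_fun (\<lambda>x. g x $ i)" for i
    using f g by (auto simp: equivariant_poly_def poly_map_def)
  have "poly_fun (\<lambda>x. (f x \<times> g x) $ i)" for i
  proof -
    have "i = 1 \<or> i = 2 \<or> i = 3" using exhaust_3 by blast
    then show ?thesis
      by (auto simp: cross_components intro!: pf_minus pf_mult pf)
  qed
  moreover have "f (\<rho> h *v x) \<times> g (\<rho> h *v x) = h *v (f x \<times> g x)" if "h \<in> SO3" for h x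
    using f g that by (simp add: equivariant_poly_def cross_rotation_matrix SO3_rot)
  ultimately show ?thesis by (simp add: equivariant_poly_def poly_map_def)
qed

lemma Cov1_subspace: "subspace (Cov1 \<rho> v)"
  unfolding subspace_def Cov1_def
proof (intro conjI ballI allI)
  show "0 \<in> {f v |f. equivariant_poly \<rho> f}"
    using equiv_zero[of \<rho>] by (metis (mono_tags, lifting) mem_Collect_eq)
next
  fix x y assume "x \<in> {f v |f. equivariant_poly \<rho> f}" "y \<in> {f v |f. equivariant_poly \<rho> f}"
  then obtain f g where "x = f v" "y = g v" "equivariant_poly \<rho> f" "equivariant_poly \<rho> g" by blast
  then show "x + y \<in> {f v |f. equivariant_poly \<rho> f}"
    using equiv_add[of \<rho> f g] by (metis (mono_tags, lifting) mem_Collect_eq)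
next
  fix c x assume "x \<in> {f v |f. equivariant_poly \<rho> f}"
  then obtain f where "x = f v" "equivariant_poly \<rho> f" by blast
  then show "c *\<^sub>R x \<in> {f v |f. equivariant_poly \<rho> f}"
    using equiv_scale[of \<rho> f c] by (metis (mono_tags, lifting) mem_Collect_eq)
qed

lemma Cov1_cross: "a \<in> Cov1 \<rho> v \<Longrightarrow> b \<in> Cov1 \<rho> v \<Longrightarrow> a \<times> b \<in> Cov1 \<rho> v"
  unfolding Cov1_def by (auto intro: equiv_cross)


lemma no_dim2:
  fixes F :: "(real^3) set"
  assumes sub: "subspace F" and cr: "\<And>a b. a \<in> F \<Longrightarrow> b \<in> F \<Longrightarrow> a \<times> b \<in> F"
    and d: "dim F = 2"
  shows False
proof -
  obtain B where B: "B \<subseteq> F" "independent B" "F \<subseteq> span B" "card B = dim F"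
    using basis_exists by blast
  then obtain a b where ab: "B = {a, b}" "a \<noteq> b" using d by (metis card_2_iff)
  have "a \<times> b \<in> span {a, b}" using cr B ab by blast
  then obtain s where "a \<times> b - s *\<^sub>R a \<in> span {b}"
    by (auto simp: span_insert)
  then obtain t where "a \<times> b - s *\<^sub>R a = t *\<^sub>R b"
    by (auto simp: span_singleton)
  then have st: "a \<times> b = s *\<^sub>R a + t *\<^sub>R b" by (simp add: algebra_simps)
  have "(a \<times> b) \<bullet> (a \<times> b) = (a \<times> b) \<bullet> (s *\<^sub>R a + t *\<^sub>R b)"
    by (metis st)
  also have "\<dots> = s * ((a \<times> b) \<bullet> a) + t * ((a \<times> b) \<bullet> b)"
    by (simp add: inner_add_right)
  also have "\<dots> = 0" by (simp add: dot_cross_self)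
  finally have "a \<times> b = 0" by simp
  then have "collinear {0, a, b}" by (simp add: cross_eq_0)
  then have "a = 0 \<or> b = 0 \<or> (\<exists>c. b = c *\<^sub>R a)" by (simp add: collinear_lemma)
  moreover have "a \<noteq> 0" using B(2) ab(1) dependent_zero by (metis insertI1)
  moreover have "b \<noteq> 0" using B(2) ab(1) dependent_zero by (metis insertI1 insert_commute)
  moreover have "b \<notin> span {a}" using B(2) ab
    by (metis independent_insert insert_commute singletonD)
  ultimately show False by (auto simp: span_singleton)
qed

lemma dim_cases:
  fixes F :: "(real^3) set"
  assumes sub: "subspace F" and cr: "\<And>a b. a \<in> F \<Longrightarrow> b \<in> F \<Longrightarrow> a \<times> b \<in> F"
  shows "dim F \<in> {0, 1, 3}"
proof -
  have "dim F \<le> 3" using dim_subset_UNIV[of F] by simp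
  moreover have "dim F \<noteq> 2" using no_dim2[OF sub cr] by blast
  ultimately have "dim F = 0 \<or> dim F = 1 \<or> dim F = 3" by linarith
  then show ?thesis by blast
qed

lemma dim1_span:
  fixes F :: "(real^3) set"
  assumes sub: "subspace F" and d: "dim F = 1"
  obtains u where "u \<noteq> 0" "F = span {u}"
proof -
  obtain B where B: "B \<subseteq> F" "independent B" "F \<subseteq> span B" "card B = dim F"
    using basis_exists by blast
  then obtain u where u: "B = {u}" using d by (metis card_1_singletonE)
  have "span B \<subseteq> F" using B sub by (simp add: span_minimal)
  then have "F = span {u}" using B u by auto
  moreover have "u \<noteq> 0" using B u by auto
  ultimately show ?thesis using that by blast
qed

lemma sym0: "sym_group {0} = SO3"
  by (auto simp: sym_group_def)

lemma symUNIV: "sym_group UNIV = {mat 1}"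
  by (auto simp: sym_group_def SO3_id matrix_eq)

lemma symspan: "sym_group (span {u}) = {g \<in> SO3. g *v u = u}"
  by (auto simp: sym_group_def span_singleton matrix_vector_mult_scaleR)

lemma conj_cancel: "k \<in> SO3 \<Longrightarrow> k ** (transpose k ** g ** k) ** transpose k = g"
proof -
  assume k: "k \<in> SO3"
  have "k ** (transpose k ** g ** k) ** transpose k = (k ** transpose k) ** g ** (k ** transpose k)"
    by (simp add: matrix_mul_assoc)
  then show ?thesis using SO3_inv[OF k] by simp
qed

lemma conj_cancel2: "k \<in> SO3 \<Longrightarrow> transpose k ** (k ** g ** transpose k) ** k = g"
proof -
  assume k: "k \<in> SO3"
  have "transpose k ** (k ** g ** transpose k) ** k = (transpose k ** k) ** g ** (transpose k ** k)"
    by (simp add: matrix_mul_assoc)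
  then show ?thesis using SO3_inv[OF k] by simp
qed

lemma conj_SO3: "k \<in> SO3 \<Longrightarrow> (\<lambda>h. k ** h ** transpose k) ` SO3 = SO3"
proof
  assume k: "k \<in> SO3"
  show "(\<lambda>h. k ** h ** transpose k) ` SO3 \<subseteq> SO3"
    using k by (auto intro!: SO3_mul SO3_transpose)
  show "SO3 \<subseteq> (\<lambda>h. k ** h ** transpose k) ` SO3"
  proof
    fix g assume g: "g \<in> SO3"
    have "g = k ** (transpose k ** g ** k) ** transpose k"
      using conj_cancel[OF k] by simp
    moreover have "transpose k ** g ** k \<in> SO3"
      using k g by (auto intro!: SO3_mul SO3_transpose)
    ultimately show "g \<in> (\<lambda>h. k ** h ** transpose k) ` SO3" by blast
  qed
qed

lemma conj_I: "k \<in> SO3 \<Longrightarrow> (\<lambda>h. k ** h ** transpose k) ` {mat 1} = {mat 1}"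
  using SO3_inv by simp

lemma conj_back:
  assumes k: "k \<in> SO3" and e: "(\<lambda>h. k ** h ** transpose k) ` A = B"
  shows "A = (\<lambda>h. transpose k ** h ** transpose (transpose k)) ` B"
proof -
  have "(\<lambda>h. transpose k ** h ** transpose (transpose k)) ` B
     = (\<lambda>h. transpose k ** (k ** h ** transpose k) ** k) ` A"
    using e by (auto simp: image_image)
  also have "\<dots> = A"
  proof -
    have "transpose k ** (k ** h ** transpose k) ** k = h" for h
      using conj_cancel2[OF k] by simp
    then show ?thesis by simp
  qed
  finally show ?thesis by simp
qed

definition D1 :: "real^3^3" where
  "D1 = (\<chi> i j. if i = j then (if i = 1 then 1 else -1) else 0)"
definition D2 :: "real^3^3" where
  "D2 = (\<chi> i j. if i = j then (if i = 3 then 1 else -1) else 0)"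

lemma D1_SO3: "D1 \<in> SO3"
  unfolding SO3_def orthogonal_matrix_def D1_def
  by (simp add: det_3 vec_eq_iff matrix_matrix_mult_def sum_3 forall_3 mat_def transpose_def)

lemma D2_SO3: "D2 \<in> SO3"
  unfolding SO3_def orthogonal_matrix_def D2_def
  by (simp add: det_3 vec_eq_iff matrix_matrix_mult_def sum_3 forall_3 mat_def transpose_def)

lemma D1_notSO2: "D1 \<notin> SO2z"
  unfolding SO2z_def D1_def
  by (simp add: vec_eq_iff matrix_vector_mult_def sum_3 forall_3 axis_def)

lemma D2_SO2: "D2 \<in> SO2z"
  using D2_SO3 unfolding SO2z_def D2_def
  by (simp add: vec_eq_iff matrix_vector_mult_def sum_3 forall_3 axis_def)

lemma D2_not1: "D2 \<noteq> mat 1"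
  unfolding D2_def by (simp add: vec_eq_iff forall_3 mat_def)

lemma SO2_ne_SO3: "SO2z \<noteq> SO3" using D1_SO3 D1_notSO2 by blast
lemma SO2_ne_1: "SO2z \<noteq> {mat 1}" using D2_SO2 D2_not1 by blast
lemma SO3_ne_1: "SO3 \<noteq> {mat 1}" using D2_SO3 D2_not1 by blast

lemma span_class:
  fixes u :: "real^3"
  assumes "u \<noteq> 0"
  obtains k where "k \<in> SO3" "sym_group (span {u}) = (\<lambda>h. k ** h ** transpose k) ` SO2z"
proof -
  have n: "norm (u /\<^sub>R norm u) = 1" using assms by simp
  obtain k where k: "rotation_matrix k" "k *v axis (3::3) 1 = u /\<^sub>R norm u"
    using rotation_matrix_exists_basis[OF _ n, of 3] by auto
  have kS: "k \<in> SO3" using k by (simp add: SO3_rot)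
  have ke: "k *v axis 3 1 = (1 / norm u) *\<^sub>R u" using k by (simp add: inverse_eq_divide)
  have ke': "transpose k *v u = norm u *\<^sub>R axis 3 1"
  proof -
    have "transpose k *v (k *v axis 3 1) = axis 3 1"
      using SO3_inv[OF kS] by (simp add: matrix_vector_mul_assoc)
    then have "transpose k *v ((1 / norm u) *\<^sub>R u) = axis 3 1" using ke by simp
    then have "(1 / norm u) *\<^sub>R (transpose k *v u) = axis 3 1"
      by (simp add: matrix_vector_mult_scaleR)
    then show ?thesis using assms by (metis divideR_right norm_eq_zero scaleR_scaleR divide_inverse_commute inverse_eq_divide)
  qed
  have "{g \<in> SO3. g *v u = u} = (\<lambda>h. k ** h ** transpose k) ` SO2z"
  proof
    show "{g \<in> SO3. g *v u = u} \<subseteq> (\<lambda>h. k ** h ** transpose k) ` SO2z"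
    proof
      fix g assume g: "g \<in> {g \<in> SO3. g *v u = u}"
      let ?h = "transpose k ** g ** k"
      have hS: "?h \<in> SO3" using g kS by (auto intro!: SO3_mul SO3_transpose)
      have "?h *v axis 3 1 = (transpose k ** g) *v (k *v axis 3 1)"
        by (simp add: matrix_vector_mul_assoc)
      also have "\<dots> = transpose k *v (g *v ((1 / norm u) *\<^sub>R u))"
        unfolding ke by (simp add: matrix_vector_mul_assoc)
      also have "\<dots> = (1 / norm u) *\<^sub>R (transpose k *v u)"
        using g by (simp add: matrix_vector_mult_scaleR)
      also have "\<dots> = axis 3 1" using ke' assms by simp
      finally have "?h \<in> SO2z" using hS by (simp add: SO2z_def)
      moreover have "g = k ** ?h ** transpose k"
        using conj_cancel[OF kS] by simp
      ultimately show "g \<in> (\<lambda>h. k ** h ** transpose k) ` SO2z" by blast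
    qed
    show "(\<lambda>h. k ** h ** transpose k) ` SO2z \<subseteq> {g \<in> SO3. g *v u = u}"
    proof
      fix g assume "g \<in> (\<lambda>h. k ** h ** transpose k) ` SO2z"
      then obtain h where h: "h \<in> SO2z" "g = k ** h ** transpose k" by blast
      have "g \<in> SO3" using h kS by (auto simp: SO2z_def intro!: SO3_mul SO3_transpose)
      moreover have "g *v u = u"
      proof -
        have "g *v u = k *v (h *v (transpose k *v u))"
          unfolding h(2) matrix_vector_mul_assoc by (simp only: matrix_mul_assoc)
        also have "\<dots> = k *v (h *v (norm u *\<^sub>R axis 3 1))"
          unfolding ke' by (rule refl)
        also have "\<dots> = norm u *\<^sub>R (k *v axis 3 1)"
          using h by (simp add: SO2z_def matrix_vector_mult_scaleR)
        also have "\<dots> = u" using ke assms by simp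
        finally show ?thesis .
      qed
      ultimately show "g \<in> {g \<in> SO3. g *v u = u}" by blast
    qed
  qed
  then show ?thesis using that[OF kS] by (simp add: symspan)
qed


lemma nc1: "k \<in> SO3 \<Longrightarrow> (\<lambda>h. k ** h ** transpose k) ` SO2z \<noteq> SO3"
proof
  assume k: "k \<in> SO3" and e: "(\<lambda>h. k ** h ** transpose k) ` SO2z = SO3"
  have "SO2z = (\<lambda>h. transpose k ** h ** transpose (transpose k)) ` SO3"
    using conj_back[OF k e] .
  also have "\<dots> = SO3" using conj_SO3[OF SO3_transpose[OF k]] by simp
  finally show False using SO2_ne_SO3 by simp
qed

lemma nc2: "k \<in> SO3 \<Longrightarrow> (\<lambda>h. k ** h ** transpose k) ` SO2z \<noteq> {mat 1}"
proof
  assume k: "k \<in> SO3" and e: "(\<lambda>h. k ** h ** transpose k) ` SO2z = {mat 1}"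
  have "SO2z = (\<lambda>h. transpose k ** h ** transpose (transpose k)) ` {mat 1}"
    using conj_back[OF k e] .
  also have "\<dots> = {mat 1}" using conj_I[OF SO3_transpose[OF k]] by simp
  finally show False using SO2_ne_1 by simp
qed

theorem proposition7p1:
  fixes \<rho> :: "real^3^3 \<Rightarrow> real^'n^'n" and v :: "real^'n"
  assumes "is_rep \<rho>"
  shows "dim (Cov1 \<rho> v) \<in> {0, 1, 3}
    \<and> (has_sym_class (Cov1 \<rho> v) SO3 \<longleftrightarrow> Cov1 \<rho> v = {0})
    \<and> (has_sym_class (Cov1 \<rho> v) SO2z \<longleftrightarrow> dim (Cov1 \<rho> v) = 1)
    \<and> (has_sym_class (Cov1 \<rho> v) {mat 1} \<longleftrightarrow> dim (Cov1 \<rho> v) = 3)"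
proof -
  define F where "F = Cov1 \<rho> v"
  have sub: "subspace F" unfolding F_def by (rule Cov1_subspace)
  have cr: "\<And>a b. a \<in> F \<Longrightarrow> b \<in> F \<Longrightarrow> a \<times> b \<in> F" unfolding F_def by (rule Cov1_cross)
  have dF: "dim F \<in> {0, 1, 3}" by (rule dim_cases[OF sub cr])
  have "has_sym_class F SO3 \<longleftrightarrow> F = {0}"
    "has_sym_class F SO2z \<longleftrightarrow> dim F = 1"
    "has_sym_class F {mat 1} \<longleftrightarrow> dim F = 3"
  proof -
    consider "dim F = 0" | "dim F = 1" | "dim F = 3" using dF by (metis insertE empty_iff)
    then have "(has_sym_class F SO3 \<longleftrightarrow> F = {0}) \<and>
      (has_sym_class F SO2z \<longleftrightarrow> dim F = 1) \<and>
      (has_sym_class F {mat 1} \<longleftrightarrow> dim F = 3)"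
    proof cases
      case 1
      have "F = {0}" using 1 subspace_0[OF sub] by auto
      then have sg: "sym_group F = SO3" by (simp add: sym0)
      have a: "has_sym_class F SO3"
        unfolding has_sym_class_def sg using conj_SO3[OF SO3_id] SO3_id by metis
      have b: "\<not> has_sym_class F SO2z"
        unfolding has_sym_class_def sg using nc1 by metis
      have c: "\<not> has_sym_class F {mat 1}"
        unfolding has_sym_class_def sg using conj_I SO3_ne_1 by metis
      show ?thesis using a b c 1 \<open>F = {0}\<close> by simp
    next
      case 2
      obtain u where u: "u \<noteq> 0" "F = span {u}" using dim1_span[OF sub 2] by blast
      obtain k0 where k0: "k0 \<in> SO3" "sym_group F = (\<lambda>h. k0 ** h ** transpose k0) ` SO2z"
        using span_class[OF u(1)] u(2) by metis
      have nz: "F \<noteq> {0}" using u span_base[of u "{u}"] by auto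
      have a: "\<not> has_sym_class F SO3"
        unfolding has_sym_class_def k0(2) using nc1[OF k0(1)] conj_SO3 by metis
      have b: "has_sym_class F SO2z"
        unfolding has_sym_class_def using k0 by blast
      have c: "\<not> has_sym_class F {mat 1}"
        unfolding has_sym_class_def k0(2) using nc2[OF k0(1)] conj_I by metis
      show ?thesis using a b c 2 nz by simp
    next
      case 3
      have "span F = UNIV" using 3 dim_eq_full[of F] by simp
      then have FU: "F = UNIV" using sub by (metis span_eq_iff)
      then have sg: "sym_group F = {mat 1}" by (simp add: symUNIV)
      have nz: "F \<noteq> {0}" proof
        assume "F = {0}"
        moreover have "axis (3::3) (1::real) \<noteq> 0" by (simp add: axis_def vec_eq_iff)
        ultimately show False using FU by (metis UNIV_I singletonD)
      qed
      have a: "\<not> has_sym_class F SO3"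
        unfolding has_sym_class_def sg using conj_SO3 SO3_ne_1 by metis
      have b: "\<not> has_sym_class F SO2z"
        unfolding has_sym_class_def sg using nc2 by metis
      have c: "has_sym_class F {mat 1}"
        unfolding has_sym_class_def sg using conj_I[OF SO3_id] SO3_id by metis
      show ?thesis using a b c 3 nz by simp
    qed
    then show "has_sym_class F SO3 \<longleftrightarrow> F = {0}"
      "has_sym_class F SO2z \<longleftrightarrow> dim F = 1"
      "has_sym_class F {mat 1} \<longleftrightarrow> dim F = 3" by blast+
  qed
  then show ?thesis using dF unfolding F_def by blast
qed

end
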